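(* Let $A=\{h\in\mathfrak{S}Sym:(\mathrm{id}\otimes\mathcal{D})\Delta(h)=h\otimes1\}$ be the left Hopf kernel of $\mathcal{D}\colon\mathfrak{S}Sym\to QSym$, and $A_n$ its homogeneous component of degree $n\ge1$. Then a basis of $A_n$ is $\{\mathcal{M}_u\}$ where $u$ runs over those $u\in\mathfrak{S}_n$ for which there is no $k\in\{0,1,\ldots,n-1\}$ with $u_{k+i}=i$ for all $1\le i\le n-k$. In particular $\dim A_n=n!-\sum_{k=0}^{n-1}k!$.
   Context: $\mathfrak{S}Sym$ is the Malvenuto–Reutenauer Hopf algebra over $\mathbb{Q}$ with basis $\{\mathcal{F}_u:u\in\mathfrak{S}_n,n\ge0\}$, graded by $n$; product $\mathcal{F}_u\cdot\mathcal{F}_v=\sum_\zeta\mathcal{F}_{(u\times v)\zeta^{-1}}$ over $\zeta\in\mathfrak{S}_{p+q}$ increasing on $[1,p]$ and on $[p+1,p+q]$ (where $(u\times v)(i)=u_i$, $i\le p$, $(u\times v)(p+j)=p+v_j$, and permutation product is composition); coproduct $\Delta(\mathcal{F}_u)=\sum_{p=0}^n\mathcal{F}_{\mathrm{st}(u_1..u_p)}\otimes\mathcal{F}_{\mathrm{st}(u_{p+1}..u_n)}$ with $\mathrm{st}$ the permutation with the same relative order. Weak order $u\le v$ iff $\mathrm{Inv}(u)\subseteq\mathrm{Inv}(v)$, Möbius function $\mu$, $\mathcal{M}_u=\sum_{v\ge u}\mu(u,v)\mathcal{F}_v$. $QSym$ is the Hopf algebra of quasi-symmetric functions with fundamental basis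 $F_J$ ($J\subseteq[n-1]$), and $\mathcal{D}(\mathcal{F}_u)=F_{\mathrm{Des}(u)}$, $\mathrm{Des}(u)=\{p:u_p>u_{p+1}\}$, is a Hopf algebra morphism. *)

theory Defs
  imports Complex_Main
begin

definition perms :: "nat \<Rightarrow> nat list set" where
  "perms n = {u. distinct u \<and> set u = {1..n}}"

definition is_perm :: "nat list \<Rightarrow> bool" where
  "is_perm u \<longleftrightarrow> u \<in> perms (length u)"

definition st :: "nat list \<Rightarrow> nat list" where
  "st xs = map (\<lambda>x. card {y \<in> set xs. y \<le> x}) xs"

text \<open>Descent set, positions 1-based: p with u_p > u_{p+1}.\<close>
definition Des :: "nat list \<Rightarrow> nat set" where
  "Des u = {p. 1 \<le> p \<and> p < length u \<and> u ! (p - 1) > u ! p}"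

text \<open>Inversions (positions, 1-based): pairs i < j with u_i > u_j.\<close>
definition Inv :: "nat list \<Rightarrow> (nat \<times> nat) set" where
  "Inv u = {(i, j). 1 \<le> i \<and> i < j \<and> j \<le> length u \<and> u ! (i - 1) > u ! (j - 1)}"

definition wle :: "nat list \<Rightarrow> nat list \<Rightarrow> bool" where
  "wle u v \<longleftrightarrow> is_perm u \<and> is_perm v \<and> length u = length v \<and> Inv u \<subseteq> Inv v"

definition wlt :: "nat list \<Rightarrow> nat list \<Rightarrow> bool" where
  "wlt u v \<longleftrightarrow> wle u v \<and> \<not> wle v u"

lemma finite_perms: "finite (perms n)"
proof -
  have "perms n \<subseteq> {xs. set xs \<subseteq> {1..n} \<and> length xs = n}"
    unfolding perms_def using distinct_card by fastforce
  then show ?thesis using finite_lists_length_eq[of "{1..n}" n] finite_subset by blast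
qed

lemma Inv_finite: "finite (Inv u)"
proof -
  have "Inv u \<subseteq> {0..length u} \<times> {0..length u}" unfolding Inv_def by auto
  then show ?thesis by (rule finite_subset) auto
qed

function mob :: "nat list \<Rightarrow> nat list \<Rightarrow> rat" where
  "mob u v = (if u = v then 1
              else if wle u v then
                - (\<Sum>w \<in> {w \<in> perms (length v). wle u w \<and> wlt w v}. mob u w)
              else 0)"
  by pat_completeness auto
termination
proof (relation "measure (\<lambda>(u, v). card (Inv v))")
  fix u v w
  assume "w \<in> {w \<in> perms (length v). wle u w \<and> wlt w v}"
  then have "Inv w \<subset> Inv v" unfolding wlt_def wle_def by auto
  then show "((u, w), u, v) \<in> measure (\<lambda>(u, v). card (Inv v))"
    using Inv_finite psubset_card_mono by auto
qed auto

text \<open>An element h of SSym is its coefficient function in the basis F_u: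
  h = sum_u h(u) F_u, finitely supported on permutations.\<close>
definition SSym :: "(nat list \<Rightarrow> rat) set" where
  "SSym = {h. finite {u. h u \<noteq> 0} \<and> (\<forall>u. h u \<noteq> 0 \<longrightarrow> is_perm u)}"

definition SSym_deg :: "nat \<Rightarrow> (nat list \<Rightarrow> rat) set" where
  "SSym_deg n = {h \<in> SSym. \<forall>u. h u \<noteq> 0 \<longrightarrow> u \<in> perms n}"

definition Mb :: "nat list \<Rightarrow> nat list \<Rightarrow> rat" where
  "Mb u = (\<lambda>v. if wle u v then mob u v else 0)"

text \<open>Elements of SSym \<otimes> QSym in coordinates of the basis F_w \<otimes> F_J, where
  w is a permutation and F_J (J \<subseteq> [m-1]) lies in QSym of degree m;
  the coordinate index is (w, m, J).
  (id \<otimes> D) \<Delta> (F_u) = sum_p F_{st(u_1..u_p)} \<otimes> F_{Des(st(u_{p+1}..u_n))}.\<close>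
definition idD_coprod :: "(nat list \<Rightarrow> rat) \<Rightarrow> nat list \<times> nat \<times> nat set \<Rightarrow> rat" where
  "idD_coprod h = (\<lambda>(w, m, J). \<Sum>u \<in> {u. h u \<noteq> 0}.
      h u * (if length u = length w + m \<and> st (take (length w) u) = w
                \<and> Des (st (drop (length w) u)) = J then 1 else 0))"

text \<open>h \<otimes> 1, where 1 = F_{} in QSym of degree 0.\<close>
definition tensor_one :: "(nat list \<Rightarrow> rat) \<Rightarrow> nat list \<times> nat \<times> nat set \<Rightarrow> rat" where
  "tensor_one h = (\<lambda>(w, m, J). if m = 0 \<and> J = {} then h w else 0)"

definition hopf_kernel :: "(nat list \<Rightarrow> rat) set" where
  "hopf_kernel = {h \<in> SSym. idD_coprod h = tensor_one h}"

definition hopf_kernel_deg :: "nat \<Rightarrow> (nat list \<Rightarrow> rat) set" where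
  "hopf_kernel_deg n = hopf_kernel \<inter> SSym_deg n"

end

theory Submission
  imports Defs "HOL-Combinatorics.Multiset_Permutations"
begin

declare mob.simps[simp del]

definition samepat :: "nat list \<Rightarrow> nat list \<Rightarrow> bool" where
  "samepat xs ys \<longleftrightarrow> length xs = length ys \<and>
     (\<forall>i<length xs. \<forall>j<length xs. xs!i < xs!j \<longleftrightarrow> ys!i < ys!j)"

lemma samepat_refl: "samepat xs xs" by (simp add: samepat_def)
lemma samepat_sym: "samepat xs ys \<Longrightarrow> samepat ys xs" by (auto simp: samepat_def)
lemma samepat_trans: "samepat xs ys \<Longrightarrow> samepat ys zs \<Longrightarrow> samepat xs zs"
  by (auto simp: samepat_def)

lemma samepat_take: "samepat xs ys \<Longrightarrow> samepat (take k xs) (take k ys)"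
  by (auto simp: samepat_def)
lemma samepat_drop: "samepat xs ys \<Longrightarrow> samepat (drop k xs) (drop k ys)"
  by (auto simp: samepat_def)

lemma st_length[simp]: "length (st xs) = length xs" by (simp add: st_def)

lemma st_nth_card:
  assumes "distinct xs" "i < length xs"
  shows "st xs ! i = card {l. l < length xs \<and> xs!l \<le> xs!i}"
proof -
  have "{y \<in> set xs. y \<le> xs!i} = (nth xs) ` {l. l < length xs \<and> xs!l \<le> xs!i}"
    by (auto simp: in_set_conv_nth)
  moreover have "inj_on (nth xs) {l. l < length xs \<and> xs!l \<le> xs!i}"
    using assms(1) by (auto simp: inj_on_def nth_eq_iff_index_eq)
  ultimately show ?thesis using assms by (simp add: st_def card_image)
qed

lemma st_less_iff:
  assumes "distinct xs" "i < length xs" "j < length xs"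
  shows "st xs ! i < st xs ! j \<longleftrightarrow> xs!i < xs!j"
proof -
  have A: "st xs ! a < st xs ! b" if ij: "xs!a < xs!b" "a < length xs" "b < length xs" for a b
  proof -
    have s1: "{l. l < length xs \<and> xs!l \<le> xs!a} \<subseteq> {l. l < length xs \<and> xs!l \<le> xs!b}"
      using ij(1) by (auto intro: order.trans)
    have s2: "b \<in> {l. l < length xs \<and> xs!l \<le> xs!b}" "b \<notin> {l. l < length xs \<and> xs!l \<le> xs!a}"
      using ij by auto
    have "{l. l < length xs \<and> xs!l \<le> xs!a} \<subset> {l. l < length xs \<and> xs!l \<le> xs!b}"
      using s1 s2 by blast
    then have "card {l. l < length xs \<and> xs!l \<le> xs!a} < card {l. l < length xs \<and> xs!l \<le> xs!b}"
      by (intro psubset_card_mono) auto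
    then show ?thesis using st_nth_card[OF assms(1)] ij by simp
  qed
  show ?thesis
  proof
    assume h: "st xs ! i < st xs ! j"
    have "i \<noteq> j" using h by auto
    then have "xs!i \<noteq> xs!j" using assms by (simp add: nth_eq_iff_index_eq)
    moreover have "\<not> xs!j < xs!i" using A[of j i] assms h by auto
    ultimately show "xs!i < xs!j" by simp
  next
    assume "xs!i < xs!j" then show "st xs ! i < st xs ! j" using A assms by blast
  qed
qed

lemma samepat_st: "distinct xs \<Longrightarrow> samepat (st xs) xs"
  by (simp add: samepat_def st_less_iff)

lemma samepat_st_eq:
  assumes "distinct xs" "distinct ys" "samepat xs ys"
  shows "st xs = st ys"
proof (rule nth_equalityI)
  show "length (st xs) = length (st ys)" using assms(3) by (simp add: samepat_def)
  fix i assume i: "i < length (st xs)"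
  have L: "length xs = length ys" using assms(3) by (simp add: samepat_def)
  have "{l. l < length xs \<and> xs!l \<le> xs!i} = {l. l < length ys \<and> ys!l \<le> ys!i}"
    using assms(3) i L unfolding samepat_def by (auto simp: not_less[symmetric])
  then show "st xs ! i = st ys ! i" using i L
    by (simp add: st_nth_card[OF assms(1)] st_nth_card[OF assms(2)])
qed

lemma samepat_distinct: "distinct xs \<Longrightarrow> samepat xs ys \<Longrightarrow> distinct ys"
  unfolding samepat_def distinct_conv_nth
  by (metis linorder_neq_iff)

lemma st_distinct: "distinct xs \<Longrightarrow> distinct (st xs)"
  using samepat_distinct[OF _ samepat_sym[OF samepat_st]] by blast

lemma st_perm: assumes "distinct xs" shows "st xs \<in> perms (length xs)"
proof -
  have D: "distinct (st xs)" using st_distinct[OF assms] .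
  have S: "set (st xs) \<subseteq> {1..length xs}"
  proof
    fix y assume "y \<in> set (st xs)"
    then obtain x where x: "x \<in> set xs" "y = card {z \<in> set xs. z \<le> x}" by (auto simp: st_def)
    have "card {z \<in> set xs. z \<le> x} \<le> card (set xs)" by (intro card_mono) auto
    moreover have "card {z \<in> set xs. z \<le> x} \<ge> 1"
    proof -
      have "x \<in> {z \<in> set xs. z \<le> x}" using x(1) by simp
      then have "card {z \<in> set xs. z \<le> x} \<noteq> 0" by (auto simp: card_eq_0_iff)
      then show ?thesis by linarith
    qed
    ultimately show "y \<in> {1..length xs}" using x assms by (simp add: distinct_card)
  qed
  have "card (set (st xs)) = card {1..length xs}" using D by (simp add: distinct_card)
  then have "set (st xs) = {1..length xs}" using S by (intro card_subset_eq) auto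
  then show ?thesis using D by (simp add: perms_def)
qed

lemma perms_length: "u \<in> perms n \<Longrightarrow> length u = n"
  unfolding perms_def by (metis (mono_tags) card_atLeastAtMost diff_Suc_1 distinct_card mem_Collect_eq)

lemma st_id: assumes "u \<in> perms n" shows "st u = u"
proof -
  have "set u = {1..n}" using assms by (simp add: perms_def)
  have "\<And>x. x \<in> {1..n} \<Longrightarrow> {y \<in> {1..n}. y \<le> x} = {1..x}" by auto
  then have "\<And>x. x \<in> set u \<Longrightarrow> card {y \<in> set u. y \<le> x} = x"
    using \<open>set u = {1..n}\<close> by simp
  then show ?thesis unfolding st_def by (simp add: map_idI)
qed


lemma Des_samepat: assumes "samepat xs ys" shows "Des xs = Des ys"
proof -
  have L: "length xs = length ys" using assms by (simp add: samepat_def)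
  have "(xs!p < xs!(p-1)) = (ys!p < ys!(p-1))" if "1 \<le> p" "p < length xs" for p
  proof -
    have "p - 1 < length xs" using that by arith
    then show ?thesis using assms that unfolding samepat_def by blast
  qed
  then show ?thesis unfolding Des_def using L by auto
qed

lemma Des_st: "distinct xs \<Longrightarrow> Des (st xs) = Des xs"
  using Des_samepat samepat_st by blast

lemma Des_empty_iff: "Des l = {} \<longleftrightarrow> sorted l"
proof -
  have "Des l = {} \<longleftrightarrow> (\<forall>p. 1 \<le> p \<and> p < length l \<longrightarrow> \<not> l!(p-1) > l!p)"
    unfolding Des_def by blast
  also have "\<dots> \<longleftrightarrow> (\<forall>i. Suc i < length l \<longrightarrow> l!i \<le> l!(Suc i))"
  proof
    assume h: "\<forall>p. 1 \<le> p \<and> p < length l \<longrightarrow> \<not> l!(p-1) > l!p"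
    show "\<forall>i. Suc i < length l \<longrightarrow> l!i \<le> l!(Suc i)"
    proof (intro allI impI)
      fix i assume "Suc i < length l"
      then show "l!i \<le> l!(Suc i)" using h[rule_format, of "Suc i"] by simp
    qed
  next
    assume h: "\<forall>i. Suc i < length l \<longrightarrow> l!i \<le> l!(Suc i)"
    show "\<forall>p. 1 \<le> p \<and> p < length l \<longrightarrow> \<not> l!(p-1) > l!p"
    proof (intro allI impI)
      fix p assume p: "1 \<le> p \<and> p < length l"
      then obtain i where "p = Suc i" by (cases p) auto
      then show "\<not> l!(p-1) > l!p" using h p by (simp add: not_less)
    qed
  qed
  finally show ?thesis by (simp add: sorted_iff_nth_Suc)
qed

lemma Inv_samepat: assumes "samepat xs ys" shows "Inv xs = Inv ys"
proof -
  have L: "length xs = length ys" using assms by (simp add: samepat_def)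
  have "(xs!(j-1) < xs!(i-1)) = (ys!(j-1) < ys!(i-1))" if "1 \<le> i" "i < j" "j \<le> length xs" for i j
  proof -
    have "i - 1 < length xs" "j - 1 < length xs" using that by arith+
    then show ?thesis using assms unfolding samepat_def by blast
  qed
  then show ?thesis unfolding Inv_def using L by auto
qed

lemma Inv_st: "distinct xs \<Longrightarrow> Inv (st xs) = Inv xs"
  using Inv_samepat samepat_st by blast

lemma Inv_take: "Inv (take k v) = {(i,j) \<in> Inv v. j \<le> k}"
  unfolding Inv_def by auto

lemma perms_distinct: "u \<in> perms n \<Longrightarrow> distinct u" by (simp add: perms_def)

lemma is_perm_iff: "is_perm u \<longleftrightarrow> u \<in> perms (length u)" by (simp add: is_perm_def)

lemma Inv_samepat_rev:
  assumes "distinct u" "distinct v" "length u = length v" "Inv u = Inv v"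
  shows "samepat u v"
  unfolding samepat_def
proof (intro conjI allI impI)
  show "length u = length v" by fact
  fix i j assume ij: "i < length u" "j < length u"
  have key: "u!b < u!a \<longleftrightarrow> v!b < v!a" if "a < b" "b < length u" for a b
  proof -
    have "(Suc a, Suc b) \<in> Inv u \<longleftrightarrow> u!b < u!a" using that by (simp add: Inv_def)
    moreover have "(Suc a, Suc b) \<in> Inv v \<longleftrightarrow> v!b < v!a" using that assms(3) by (simp add: Inv_def)
    ultimately show ?thesis using assms(4) by simp
  qed
  consider "i < j" | "i = j" | "j < i" by arith
  then show "u!i < u!j \<longleftrightarrow> v!i < v!j"
  proof cases
    case 1
    have "u!i \<noteq> u!j" "v!i \<noteq> v!j" using 1 ij assms by (auto simp: nth_eq_iff_index_eq)
    then show ?thesis using key[OF 1] ij by auto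
  qed (use key ij in auto)
qed

lemma perm_Inv_inj:
  assumes "u \<in> perms n" "v \<in> perms n" "Inv u = Inv v" shows "u = v"
proof -
  have "samepat u v" using assms by (intro Inv_samepat_rev) (auto simp: perms_distinct perms_length)
  then have "st u = st v" using assms by (intro samepat_st_eq) (auto simp: perms_distinct)
  then show ?thesis using st_id assms by metis
qed

lemma wle_perms: "wle u v \<Longrightarrow> u \<in> perms (length u) \<and> v \<in> perms (length u)"
  by (auto simp: wle_def is_perm_def)

lemma wle_antisym: assumes "wle u v" "wle v u" shows "u = v"
proof -
  have "Inv u = Inv v" using assms by (auto simp: wle_def)
  moreover have "u \<in> perms (length u)" "v \<in> perms (length u)" using assms by (auto simp: wle_def is_perm_def)
  ultimately show ?thesis using perm_Inv_inj by blast
qed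

lemma wle_trans: "wle u v \<Longrightarrow> wle v w \<Longrightarrow> wle u w"
  unfolding wle_def by auto

lemma wle_refl: "u \<in> perms n \<Longrightarrow> wle u u"
  by (auto simp: wle_def is_perm_def perms_length)

lemma wlt_iff: "wlt u v \<longleftrightarrow> wle u v \<and> u \<noteq> v"
proof
  assume a: "wlt u v"
  then have "wle u v" "\<not> wle v u" unfolding wlt_def by auto
  moreover have "u \<noteq> v"
  proof
    assume "u = v"
    then have "wle v u" using \<open>wle u v\<close> wle_perms wle_refl by metis
    then show False using \<open>\<not> wle v u\<close> by simp
  qed
  ultimately show "wle u v \<and> u \<noteq> v" by simp
next
  assume "wle u v \<and> u \<noteq> v" then show "wlt u v"
    unfolding wlt_def using wle_antisym by blast
qed

lemma wle_card_less: assumes "wle v u" "v \<noteq> u" shows "card (Inv v) < card (Inv u)"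
proof -
  have sub: "Inv v \<subseteq> Inv u" using assms(1) by (simp add: wle_def)
  have "Inv v \<noteq> Inv u"
  proof
    assume "Inv v = Inv u"
    moreover have "u \<in> perms (length v)" "v \<in> perms (length v)" using wle_perms[OF assms(1)] by auto
    ultimately show False using perm_Inv_inj assms(2) by metis
  qed
  then have "Inv v \<subset> Inv u" using sub by blast
  then show ?thesis using Inv_finite psubset_card_mono by blast
qed


definition Hs :: "nat \<Rightarrow> (nat list \<Rightarrow> rat) \<Rightarrow> nat list \<Rightarrow> rat" where
  "Hs n h u = (\<Sum>v\<in>{v\<in>perms n. wle v u}. h v)"

lemma mob_refl: "mob u u = 1" by (subst mob.simps) simp

lemma Hs_Mb:
  assumes u: "u \<in> perms n" and u': "u' \<in> perms n"
  shows "Hs n (Mb u) u' = (if u = u' then 1 else 0)"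
proof -
  have fin: "finite {v\<in>perms n. wle v u'}" using finite_perms by simp
  have "Hs n (Mb u) u' = (\<Sum>v\<in>{v\<in>perms n. wle v u'}. if wle u v then mob u v else 0)"
    by (simp add: Hs_def Mb_def)
  also have "\<dots> = (\<Sum>v\<in>{v\<in>{v\<in>perms n. wle v u'}. wle u v}. mob u v)"
    using sum.inter_filter[OF fin, of "mob u" "wle u"] by simp
  also have "{v\<in>{v\<in>perms n. wle v u'}. wle u v} = {v\<in>perms n. wle u v \<and> wle v u'}" by auto
  finally have E: "Hs n (Mb u) u' = (\<Sum>v\<in>{v\<in>perms n. wle u v \<and> wle v u'}. mob u v)" .
  show ?thesis
  proof (cases "u = u'")
    case True
    have "{v\<in>perms n. wle u v \<and> wle v u'} = {u}"
      using True wle_antisym wle_refl[OF u] u by auto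
    then show ?thesis using E True by (simp add: mob_refl)
  next
    case False
    show ?thesis
    proof (cases "wle u u'")
      case True
      have L: "length u' = n" using u' perms_length by blast
      let ?S = "{w\<in>perms n. wle u w \<and> wlt w u'}"
      have "mob u u' = - (\<Sum>w\<in>?S. mob u w)"
        using False True L by (subst mob.simps) simp
      moreover have "{v\<in>perms n. wle u v \<and> wle v u'} = insert u' ?S"
        using True u' wle_refl[OF u'] by (auto simp: wlt_iff)
      moreover have "u' \<notin> ?S" by (auto simp: wlt_iff)
      moreover have "finite ?S" using finite_perms by simp
      ultimately show ?thesis using E False by simp
    next
      case F2: False
      have em: "{v\<in>perms n. wle u v \<and> wle v u'} = {}" using F2 wle_trans by blast
      show ?thesis unfolding E em using False by simp
    qed
  qed
qed

lemma Hs_zero: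
  assumes supp: "\<And>v. g v \<noteq> 0 \<Longrightarrow> v \<in> perms n"
    and H: "\<And>u. u \<in> perms n \<Longrightarrow> Hs n g u = 0"
  shows "g u = 0"
proof -
  have "\<forall>u. card (Inv u) = m \<longrightarrow> u \<in> perms n \<longrightarrow> g u = 0" for m
  proof (induction m rule: less_induct)
    case (less m)
    show ?case
    proof (intro allI impI)
      fix u assume cu: "card (Inv u) = m" and u: "u \<in> perms n"
      let ?S = "{v\<in>perms n. wle v u}"
      have "?S = insert u {v\<in>perms n. wle v u \<and> v \<noteq> u}" using wle_refl[OF u] u by auto
      then have "Hs n g u = g u + (\<Sum>v\<in>{v\<in>perms n. wle v u \<and> v \<noteq> u}. g v)"
        unfolding Hs_def using finite_perms by simp
      moreover have "(\<Sum>v\<in>{v\<in>perms n. wle v u \<and> v \<noteq> u}. g v) = 0"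
      proof (rule sum.neutral, intro ballI)
        fix v assume v: "v \<in> {v\<in>perms n. wle v u \<and> v \<noteq> u}"
        then have "card (Inv v) < m" using wle_card_less cu by blast
        then show "g v = 0" using less v by blast
      qed
      ultimately show "g u = 0" using H[OF u] by simp
    qed
  qed
  then show ?thesis using supp by blast
qed

lemma Hs_lin:
  assumes "finite B"
  shows "Hs n (\<lambda>v. \<Sum>u\<in>B. a u * Mb u v) u' = (\<Sum>u\<in>B. a u * Hs n (Mb u) u')"
  unfolding Hs_def by (simp add: sum_distrib_left sum.swap[of _ B])

lemma Hs_diff: "Hs n (\<lambda>v. f v - g v) u = Hs n f u - Hs n g u"
  unfolding Hs_def by (simp add: sum_subtractf)


definition phiJ :: "nat \<Rightarrow> (nat list \<Rightarrow> rat) \<Rightarrow> nat \<Rightarrow> nat list \<Rightarrow> nat set \<Rightarrow> rat" where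
  "phiJ n h k w J = (\<Sum>u\<in>perms n. h u * (if st (take k u) = w \<and> Des (st (drop k u)) = J then 1 else 0))"

lemma SSym_deg_supp: "h \<in> SSym_deg n \<Longrightarrow> h u \<noteq> 0 \<Longrightarrow> u \<in> perms n"
  by (simp add: SSym_deg_def)

lemma idD_eq:
  assumes h: "h \<in> SSym_deg n"
  shows "idD_coprod h (w, m, J) = (if length w + m = n then phiJ n h (length w) w J else 0)"
proof -
  let ?f = "\<lambda>u. h u * (if length u = length w + m \<and> st (take (length w) u) = w
                \<and> Des (st (drop (length w) u)) = J then 1 else 0)"
  have sub: "{u. h u \<noteq> 0} \<subseteq> perms n" using SSym_deg_supp[OF h] by blast
  have "idD_coprod h (w, m, J) = sum ?f {u. h u \<noteq> 0}" by (simp add: idD_coprod_def)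
  also have "\<dots> = sum ?f (perms n)"
    by (rule sum.mono_neutral_left) (use sub finite_perms in auto)
  also have "\<dots> = (if length w + m = n then phiJ n h (length w) w J else 0)"
  proof (cases "length w + m = n")
    case True
    have "sum ?f (perms n) = phiJ n h (length w) w J"
      unfolding phiJ_def using True by (intro sum.cong) (auto simp: perms_length)
    then show ?thesis using True by simp
  next
    case False
    then show ?thesis by (auto intro!: sum.neutral simp: perms_length)
  qed
  finally show ?thesis .
qed

lemma st_take_perm: "u \<in> perms n \<Longrightarrow> k \<le> n \<Longrightarrow> st (take k u) \<in> perms k"
  using st_perm[of "take k u"] by (simp add: perms_distinct perms_length)

lemma phiJ_nonperm:
  assumes "w \<notin> perms k" "k \<le> n" shows "phiJ n h k w J = 0"
  unfolding phiJ_def using st_take_perm assms by (intro sum.neutral) auto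

lemma A1:
  assumes h: "h \<in> hopf_kernel_deg n" and k: "k < n" and w: "length w = k"
  shows "phiJ n h k w {} = 0"
proof -
  have hd: "h \<in> SSym_deg n" and eq: "idD_coprod h = tensor_one h"
    using h by (auto simp: hopf_kernel_deg_def hopf_kernel_def)
  have "idD_coprod h (w, n - k, {}) = phiJ n h k w {}" using idD_eq[OF hd] k w by simp
  moreover have "tensor_one h (w, n - k, {}) = 0" using k by (simp add: tensor_one_def)
  ultimately show ?thesis using eq by simp
qed

lemma sum_ind:
  assumes "finite W"
  shows "(\<Sum>w\<in>W. (if x = w \<and> P then 1 else 0::rat)) = (if x \<in> W \<and> P then 1 else 0)"
  using assms by (cases P) (simp_all add: sum.delta)

lemma sum_phi_exchange:
  assumes "finite W"
  shows "(\<Sum>w\<in>W. phiJ n h j w J) =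
    (\<Sum>u\<in>perms n. h u * (if st (take j u) \<in> W \<and> Des (st (drop j u)) = J then 1 else 0))"
proof -
  have "(\<Sum>w\<in>W. phiJ n h j w J) =
     (\<Sum>u\<in>perms n. h u * (\<Sum>w\<in>W. (if st (take j u) = w \<and> Des (st (drop j u)) = J then 1 else 0)))"
    unfolding phiJ_def by (simp add: sum_distrib_left sum.swap[of _ W])
  then show ?thesis using sum_ind[OF assms] by simp
qed

lemma Des_take: "Des (take d l) = Des l \<inter> {..<d}"
  unfolding Des_def by auto

lemma Des_drop: "Des (drop d l) = {q. 1 \<le> q \<and> q + d \<in> Des l}"
proof -
  have "(drop d l ! (q - 1) > drop d l ! q) = (l ! (q + d - 1) > l ! (q + d))"
    if "1 \<le> q" "q < length l - d" for q
    using that by (simp add: add.commute add_diff_assoc2)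
  then show ?thesis unfolding Des_def by (auto simp: add.commute)
qed

lemma Des_subset: "Des l \<subseteq> {1..<length l}"
  unfolding Des_def by auto


lemma setlem:
  fixes D J :: "nat set"
  assumes "d \<in> J" "\<forall>x\<in>J. x \<le> d" "\<forall>x\<in>D. 1 \<le> x"
  shows "(D \<inter> {..<d} = J - {d} \<and> {q. 1 \<le> q \<and> q + d \<in> D} = {}) \<longleftrightarrow> (D = J \<or> D = J - {d})"
proof
  assume a: "D \<inter> {..<d} = J - {d} \<and> {q. 1 \<le> q \<and> q + d \<in> D} = {}"
  have le: "\<forall>x\<in>D. x \<le> d"
  proof
    fix x assume x: "x \<in> D"
    show "x \<le> d"
    proof (rule ccontr)
      assume "\<not> x \<le> d"
      then have "x - d \<in> {q. 1 \<le> q \<and> q + d \<in> D}" using x by auto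
      then show False using a by blast
    qed
  qed
  have lo: "x \<in> D \<longleftrightarrow> x \<in> J" if "x < d" for x
  proof -
    have "x \<in> D \<longleftrightarrow> x \<in> D \<inter> {..<d}" using that by simp
    also have "\<dots> \<longleftrightarrow> x \<in> J - {d}" using a by simp
    finally show ?thesis using that by simp
  qed
  have "x \<in> D \<longleftrightarrow> x \<in> J" if "x \<noteq> d" for x
  proof (cases "x < d")
    case True then show ?thesis using lo by simp
  next
    case False
    then have "d < x" using that by simp
    then show ?thesis using le assms(2) by (meson leD)
  qed
  note X = this
  show "D = J \<or> D = J - {d}"
  proof (cases "d \<in> D")
    case True
    have "D = J"
    proof (rule set_eqI)
      fix x show "x \<in> D \<longleftrightarrow> x \<in> J" using X[of x] True assms(1) by (cases "x = d") auto
    qed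
    then show ?thesis ..
  next
    case False
    have "D = J - {d}"
    proof (rule set_eqI)
      fix x show "x \<in> D \<longleftrightarrow> x \<in> J - {d}" using X[of x] False assms(1) by (cases "x = d") auto
    qed
    then show ?thesis ..
  qed
next
  assume a: "D = J \<or> D = J - {d}"
  have "D \<inter> {..<d} = J - {d}"
  proof
    show "D \<inter> {..<d} \<subseteq> J - {d}" using a by auto
    show "J - {d} \<subseteq> D \<inter> {..<d}"
    proof
      fix x assume x: "x \<in> J - {d}"
      then have "x \<le> d" "x \<noteq> d" using assms(2) by auto
      then have "x < d" by simp
      then show "x \<in> D \<inter> {..<d}" using a x by auto
    qed
  qed
  moreover have "{q. 1 \<le> q \<and> q + d \<in> D} = {}"
  proof -
    have "q + d \<notin> D" if "1 \<le> q" for q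
    proof
      assume "q + d \<in> D"
      then have "q + d \<in> J" using a by auto
      then show False using assms(2) that by fastforce
    qed
    then show ?thesis by auto
  qed
  ultimately show "D \<inter> {..<d} = J - {d} \<and> {q. 1 \<le> q \<and> q + d \<in> D} = {}" by simp
qed

lemma KE:
  assumes u: "u \<in> perms n" and kd: "k + d \<le> n"
    and J: "d \<in> J" "\<forall>x\<in>J. x \<le> d"
  shows "(st (take k (st (take (k+d) u))) = w \<and> Des (st (drop k (st (take (k+d) u)))) = J - {d}
          \<and> Des (st (drop (k+d) u)) = {})
     \<longleftrightarrow> (st (take k u) = w \<and> (Des (st (drop k u)) = J \<or> Des (st (drop k u)) = J - {d}))"
proof -
  have du: "distinct u" using u by (rule perms_distinct)
  let ?t = "take (k+d) u"
  have dt: "distinct ?t" using du by simp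
  have spt: "samepat (st ?t) ?t" using samepat_st[OF dt] .
  have F1: "st (take k (st ?t)) = st (take k u)"
  proof -
    have "samepat (take k (st ?t)) (take k ?t)" using samepat_take[OF spt] .
    moreover have "take k ?t = take k u" by (simp add: min_def)
    ultimately show ?thesis
      using st_distinct[OF dt] du by (intro samepat_st_eq) (auto intro: distinct_take)
  qed
  have F2: "Des (st (drop k (st ?t))) = Des (drop k u) \<inter> {..<d}"
  proof -
    have "Des (st (drop k (st ?t))) = Des (drop k (st ?t))"
      using st_distinct[OF dt] by (intro Des_st) simp
    also have "\<dots> = Des (drop k ?t)" using samepat_drop[OF spt] by (rule Des_samepat)
    also have "drop k ?t = take d (drop k u)" by (simp add: drop_take)
    finally show ?thesis by (simp add: Des_take)
  qed
  have F3: "Des (st (drop (k+d) u)) = {q. 1 \<le> q \<and> q + d \<in> Des (drop k u)}"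
  proof -
    have "Des (st (drop (k+d) u)) = Des (drop (k+d) u)" using du by (intro Des_st) simp
    also have "\<dots> = Des (drop d (drop k u))" by (simp add: add.commute)
    also have "\<dots> = {q. 1 \<le> q \<and> q + d \<in> Des (drop k u)}" by (rule Des_drop)
    finally show ?thesis .
  qed
  have F4: "Des (st (drop k u)) = Des (drop k u)" using du by (intro Des_st) simp
  have pos: "\<forall>x\<in>Des (drop k u). 1 \<le> x" using Des_subset by fastforce
  show ?thesis
    unfolding F1 F2 F3 F4 using setlem[OF J pos] by blast
qed

lemma JL:
  assumes hyp: "\<And>j w'. j < n \<Longrightarrow> w' \<in> perms j \<Longrightarrow> phiJ n h j w' {} = 0"
    and k: "k < n"
  shows "phiJ n h k w J = 0"
proof (induction "card J" arbitrary: J rule: less_induct)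
  case less
  show ?case
  proof (cases "J \<subseteq> {1..<n-k}")
    case False
    have "Des (st (drop k u)) \<noteq> J" if "u \<in> perms n" for u
      using Des_subset[of "st (drop k u)"] that False by (auto simp: perms_length)
    then show ?thesis unfolding phiJ_def by (intro sum.neutral) auto
  next
    case sub: True
    then have finJ: "finite J" using finite_subset by blast
    show ?thesis
    proof (cases "J = {}")
      case True
      then show ?thesis using hyp[OF k] phiJ_nonperm[of w k n h] k by (cases "w \<in> perms k") auto
    next
      case ne: False
      define d where "d = Max J"
      have dJ: "d \<in> J" using finJ ne d_def by simp
      have dle: "\<forall>x\<in>J. x \<le> d" using finJ d_def by simp
      have "d < n - k" using sub dJ by auto
      then have kd: "k + d < n" by simp
      define W where "W = {w'\<in>perms (k+d). st (take k w') = w \<and> Des (st (drop k w')) = J - {d}}"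
      have finW: "finite W" unfolding W_def using finite_perms by simp
      have IH: "phiJ n h k w (J - {d}) = 0"
        using less[of "J - {d}"] card_Diff1_less[OF finJ dJ] by blast
      have neq: "J \<noteq> J - {d}" using dJ by blast
      have "phiJ n h k w J + phiJ n h k w (J - {d}) =
        (\<Sum>u\<in>perms n. h u * (if st (take k u) = w \<and> (Des (st (drop k u)) = J \<or> Des (st (drop k u)) = J - {d}) then 1 else 0))"
        unfolding phiJ_def sum.distrib[symmetric]
        by (intro sum.cong refl) (use neq in auto)
      also have "\<dots> = (\<Sum>u\<in>perms n. h u * (if st (take (k+d) u) \<in> W \<and> Des (st (drop (k+d) u)) = {} then 1 else 0))"
      proof (intro sum.cong refl)
        fix u assume u: "u \<in> perms n"
        have "st (take (k+d) u) \<in> perms (k+d)" using st_take_perm[OF u] kd by simp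
        then have "(st (take (k+d) u) \<in> W \<and> Des (st (drop (k+d) u)) = {}) \<longleftrightarrow>
          (st (take k u) = w \<and> (Des (st (drop k u)) = J \<or> Des (st (drop k u)) = J - {d}))"
          unfolding W_def using KE[OF u _ dJ dle, where w=w] kd by simp
        then show "h u * (if st (take k u) = w \<and> (Des (st (drop k u)) = J \<or> Des (st (drop k u)) = J - {d}) then 1 else 0)
          = h u * (if st (take (k+d) u) \<in> W \<and> Des (st (drop (k+d) u)) = {} then 1 else 0)"
          by simp
      qed
      also have "\<dots> = (\<Sum>w'\<in>W. phiJ n h (k+d) w' {})"
        using sum_phi_exchange[OF finW] by simp
      also have "\<dots> = 0" using hyp kd unfolding W_def by (intro sum.neutral) auto
      finally show ?thesis using IH by simp
    qed
  qed
qed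

lemma A2:
  assumes h: "h \<in> SSym_deg n"
    and hyp: "\<And>j w'. j < n \<Longrightarrow> w' \<in> perms j \<Longrightarrow> phiJ n h j w' {} = 0"
  shows "h \<in> hopf_kernel"
proof -
  have "idD_coprod h x = tensor_one h x" for x
  proof -
    obtain w m J where x: "x = (w, m, J)" by (cases x) auto
    have hw: "w \<notin> perms n \<Longrightarrow> h w = 0" using SSym_deg_supp[OF h] by blast
    show ?thesis
    proof (cases "length w + m = n")
      case False
      then have "w \<notin> perms n \<or> m \<noteq> 0" using perms_length by fastforce
      then show ?thesis using False hw unfolding x idD_eq[OF h] by (auto simp: tensor_one_def)
    next
      case True
      show ?thesis
      proof (cases "m = 0")
        case m0: True
        have lw: "length w = n" using True m0 by simp
        have "phiJ n h n w J = (\<Sum>u\<in>perms n. h u * (if u = w \<and> J = {} then 1 else 0))"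
          unfolding phiJ_def
          by (intro sum.cong refl) (auto simp: perms_length st_id Des_def)
        also have "\<dots> = (if J = {} then h w else 0)"
        proof (cases "J = {}")
          case True
          have "(\<Sum>u\<in>perms n. h u * (if u = w \<and> J = {} then 1 else 0)) = (\<Sum>u\<in>perms n. if u = w then h w else 0)"
            using True by (intro sum.cong) auto
          also have "\<dots> = (if w \<in> perms n then h w else 0)" by (simp add: sum.delta finite_perms)
          also have "\<dots> = h w" using hw by auto
          finally show ?thesis using True by simp
        qed simp
        finally show ?thesis unfolding x idD_eq[OF h] using True m0 lw
          by (simp add: tensor_one_def)
      next
        case m1: False
        have "phiJ n h (length w) w J = 0" using True m1 by (intro JL[OF hyp]) auto
        then show ?thesis unfolding x idD_eq[OF h] using True m1
          by (simp add: tensor_one_def)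
      qed
    qed
  qed
  then show ?thesis using h by (auto simp: hopf_kernel_def SSym_deg_def)
qed


lemma Bcond_iff:
  assumes "length u = n" "k < n"
  shows "(\<forall>i\<in>{1..n-k}. u!(k+i-1) = i) \<longleftrightarrow> drop k u = [1..<n-k+1]"
proof
  assume a: "\<forall>i\<in>{1..n-k}. u!(k+i-1) = i"
  show "drop k u = [1..<n-k+1]"
  proof (rule nth_equalityI)
    show "length (drop k u) = length [1..<n-k+1]" using assms by (simp del: upt_Suc)
    fix i assume i: "i < length (drop k u)"
    then have "Suc i \<in> {1..n-k}" using assms by simp
    then have "u!(k + Suc i - 1) = Suc i" using a by blast
    then show "drop k u ! i = [1..<n-k+1] ! i" using i assms by (simp del: upt_Suc add: nth_upt)
  qed
next
  assume a: "drop k u = [1..<n-k+1]"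
  show "\<forall>i\<in>{1..n-k}. u!(k+i-1) = i"
  proof
    fix i assume i: "i \<in> {1..n-k}"
    have "drop k u ! (i - 1) = [1..<n-k+1] ! (i - 1)" using a by simp
    then show "u!(k+i-1) = i" using i assms by (simp del: upt_Suc add: nth_upt add.commute add_diff_assoc)
  qed
qed

lemma u_suffix_val:
  assumes "u \<in> perms n" "drop k u = [1..<n-k+1]" "k \<le> i" "i < n"
  shows "u!i = i - k + 1"
proof -
  have L: "length u = n" using assms(1) perms_length by blast
  have "drop k u ! (i - k) = [1..<n-k+1] ! (i - k)" using assms(2) by simp
  then show ?thesis using assms(3,4) L by (simp del: upt_Suc add: nth_upt)
qed

lemma u_prefix_big:
  assumes u: "u \<in> perms n" and dr: "drop k u = [1..<n-k+1]" and i: "i < k" and k: "k \<le> n"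
  shows "u!i > n - k"
proof -
  have L: "length u = n" using u perms_length by blast
  have du: "distinct u" using u perms_distinct by blast
  have "u!i \<in> set (take k u)" using i k L by (auto simp: in_set_conv_nth intro!: exI[of _ i])
  then have "u!i \<notin> set (drop k u)" using du
    by (metis append_take_drop_id disjoint_iff distinct_append)
  moreover have "u!i \<in> {1..n}" using u i k L by (auto simp: perms_def)
  ultimately show ?thesis using dr by auto
qed

lemma sorted_drop_iff:
  assumes "length v = n"
  shows "sorted (drop k v) \<longleftrightarrow> (\<forall>i j. k \<le> i \<longrightarrow> i < j \<longrightarrow> j < n \<longrightarrow> v!i \<le> v!j)"
proof
  assume s: "sorted (drop k v)"
  show "\<forall>i j. k \<le> i \<longrightarrow> i < j \<longrightarrow> j < n \<longrightarrow> v!i \<le> v!j"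
  proof (intro allI impI)
    fix i j assume ij: "k \<le> i" "i < j" "j < n"
    have "drop k v ! (i - k) \<le> drop k v ! (j - k)"
      using s ij assms by (intro sorted_nth_mono) auto
    then show "v!i \<le> v!j" using ij assms by simp
  qed
next
  assume a: "\<forall>i j. k \<le> i \<longrightarrow> i < j \<longrightarrow> j < n \<longrightarrow> v!i \<le> v!j"
  show "sorted (drop k v)"
    unfolding sorted_iff_nth_mono_less
  proof (intro allI impI)
    fix i j assume ij: "i < j" "j < length (drop k v)"
    then show "drop k v ! i \<le> drop k v ! j" using a assms by simp
  qed
qed

lemma LB:
  assumes u: "u \<in> perms n" and k: "k \<le> n" and dr: "drop k u = [1..<n-k+1]"
    and v: "v \<in> perms n"
  shows "wle v u \<longleftrightarrow> wle (st (take k v)) (st (take k u)) \<and> Des (st (drop k v)) = {}"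
proof -
  have Lu: "length u = n" using u perms_length by blast
  have Lv: "length v = n" using v perms_length by blast
  have du: "distinct u" using u perms_distinct by blast
  have dv: "distinct v" using v perms_distinct by blast
  have W1: "wle v u \<longleftrightarrow> Inv v \<subseteq> Inv u" using u v Lu Lv by (simp add: wle_def is_perm_def)
  have stv: "st (take k v) \<in> perms k" using st_take_perm[OF v k] .
  have stu: "st (take k u) \<in> perms k" using st_take_perm[OF u k] .
  have W2: "wle (st (take k v)) (st (take k u)) \<longleftrightarrow> Inv (take k v) \<subseteq> Inv (take k u)"
  proof -
    have l1: "length (st (take k v)) = k" using perms_length[OF stv] .
    have l2: "length (st (take k u)) = k" using perms_length[OF stu] .
    have p1: "is_perm (st (take k v))" by (metis is_perm_def l1 stv)
    have p2: "is_perm (st (take k u))" by (metis is_perm_def l2 stu)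
    have "wle (st (take k v)) (st (take k u)) \<longleftrightarrow> Inv (st (take k v)) \<subseteq> Inv (st (take k u))"
      unfolding wle_def using p1 p2 l1 l2 by metis
    then show ?thesis using du dv by (simp add: Inv_st)
  qed
  have W3: "Des (st (drop k v)) = {} \<longleftrightarrow> (\<forall>i j. k \<le> i \<longrightarrow> i < j \<longrightarrow> j < n \<longrightarrow> v!i \<le> v!j)"
    using dv by (simp add: Des_st Des_empty_iff sorted_drop_iff[OF Lv])
  have U1: "u!i < u!j" if "k \<le> i" "i < j" "j < n" for i j
    using u_suffix_val[OF u dr] that by simp
  have U2: "u!j < u!i" if "i < k" "k \<le> j" "j < n" for i j
    using u_suffix_val[OF u dr, of j] u_prefix_big[OF u dr, of i] that k by simp
  show ?thesis
  proof
    assume a: "wle v u"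
    then have sub: "Inv v \<subseteq> Inv u" using W1 by simp
    have "Inv (take k v) \<subseteq> Inv (take k u)" using sub by (auto simp: Inv_take)
    moreover have "\<forall>i j. k \<le> i \<longrightarrow> i < j \<longrightarrow> j < n \<longrightarrow> v!i \<le> v!j"
    proof (intro allI impI)
      fix i j assume ij: "k \<le> i" "i < j" "j < n"
      show "v!i \<le> v!j"
      proof (rule ccontr)
        assume "\<not> v!i \<le> v!j"
        then have "(Suc i, Suc j) \<in> Inv v" using ij Lv by (simp add: Inv_def)
        then have "(Suc i, Suc j) \<in> Inv u" using sub by blast
        then have "u!j < u!i" by (simp add: Inv_def)
        then show False using U1[OF ij] by simp
      qed
    qed
    ultimately show "wle (st (take k v)) (st (take k u)) \<and> Des (st (drop k v)) = {}"
      using W2 W3 by simp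
  next
    assume a: "wle (st (take k v)) (st (take k u)) \<and> Des (st (drop k v)) = {}"
    then have s1: "Inv (take k v) \<subseteq> Inv (take k u)"
      and s2: "\<forall>i j. k \<le> i \<longrightarrow> i < j \<longrightarrow> j < n \<longrightarrow> v!i \<le> v!j" using W2 W3 by auto
    have "Inv v \<subseteq> Inv u"
    proof
      fix p assume p: "p \<in> Inv v"
      obtain i j where pij: "p = (i, j)" by (cases p) auto
      have ij: "1 \<le> i" "i < j" "j \<le> n" "v!(j-1) < v!(i-1)" using p pij Lv by (auto simp: Inv_def)
      show "p \<in> Inv u"
      proof (cases "j \<le> k")
        case True
        then have "p \<in> Inv (take k v)" using p pij by (simp add: Inv_take)
        then have "p \<in> Inv (take k u)" using s1 by blast
        then show ?thesis using pij by (simp add: Inv_take)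
      next
        case jk: False
        show ?thesis
        proof (cases "i \<le> k")
          case True
          have "u!(j-1) < u!(i-1)" using U2[of "i-1" "j-1"] True jk ij by simp
          then show ?thesis using pij ij Lu by (simp add: Inv_def)
        next
          case False
          have "v!(i-1) \<le> v!(j-1)" using s2 False ij by simp
          then show ?thesis using ij by simp
        qed
      qed
    qed
    then show "wle v u" using W1 by simp
  qed
qed

definition ext :: "nat \<Rightarrow> nat \<Rightarrow> nat list \<Rightarrow> nat list" where
  "ext n k x = map (\<lambda>i. i + (n - k)) x @ [1..<n-k+1]"

lemma ext_props:
  assumes x: "x \<in> perms k" and k: "k \<le> n"
  shows "ext n k x \<in> perms n" "drop k (ext n k x) = [1..<n-k+1]" "st (take k (ext n k x)) = x"
proof -
  have Lx: "length x = k" using x perms_length by blast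
  have dx: "distinct x" and sx: "set x = {1..k}" using x by (auto simp: perms_def)
  have "distinct (map (\<lambda>i. i + (n - k)) x)" using dx by (simp add: distinct_map inj_on_def)
  moreover have "set (map (\<lambda>i. i + (n - k)) x) = {n-k+1..n}"
  proof -
    have "set (map (\<lambda>i. i + (n - k)) x) = (\<lambda>i. i + (n - k)) ` {1..k}" using sx by simp
    also have "\<dots> = {n-k+1..n}"
    proof
      show "(\<lambda>i. i + (n - k)) ` {1..k} \<subseteq> {n-k+1..n}" using k by auto
      show "{n-k+1..n} \<subseteq> (\<lambda>i. i + (n - k)) ` {1..k}"
      proof
        fix y assume y: "y \<in> {n-k+1..n}"
        then have "y = (y - (n - k)) + (n - k)" "y - (n - k) \<in> {1..k}" using k by auto
        then show "y \<in> (\<lambda>i. i + (n - k)) ` {1..k}" by blast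
      qed
    qed
    finally show ?thesis .
  qed
  moreover have "set [1..<n-k+1] = {1..n-k}" by auto
  ultimately have "distinct (ext n k x)" "set (ext n k x) = {1..n}"
    unfolding ext_def using k by auto
  then show "ext n k x \<in> perms n" by (simp add: perms_def)
  show "drop k (ext n k x) = [1..<n-k+1]" unfolding ext_def using Lx by simp
  have "take k (ext n k x) = map (\<lambda>i. i + (n - k)) x" unfolding ext_def using Lx by simp
  moreover have "samepat (map (\<lambda>i. i + (n - k)) x) x" by (simp add: samepat_def)
  ultimately have "st (take k (ext n k x)) = st x"
    using dx \<open>distinct (map (\<lambda>i. i + (n - k)) x)\<close> by (simp add: samepat_st_eq)
  then show "st (take k (ext n k x)) = x" using st_id[OF x] by simp
qed


lemma HS_phi:
  assumes u: "u \<in> perms n" and k: "k \<le> n" and dr: "drop k u = [1..<n-k+1]"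
  shows "Hs n h u = (\<Sum>w\<in>{w\<in>perms k. wle w (st (take k u))}. phiJ n h k w {})"
proof -
  let ?W = "{w\<in>perms k. wle w (st (take k u))}"
  have "Hs n h u = (\<Sum>v\<in>perms n. if wle v u then h v else 0)"
    unfolding Hs_def using sum.inter_filter[OF finite_perms[of n], of h "\<lambda>v. wle v u"] by simp
  also have "\<dots> = (\<Sum>v\<in>perms n. h v * (if st (take k v) \<in> ?W \<and> Des (st (drop k v)) = {} then 1 else 0))"
  proof (intro sum.cong refl)
    fix v assume v: "v \<in> perms n"
    have "st (take k v) \<in> perms k" using st_take_perm[OF v k] .
    then have "wle v u \<longleftrightarrow> st (take k v) \<in> ?W \<and> Des (st (drop k v)) = {}"
      using LB[OF u k dr v] by auto
    then show "(if wle v u then h v else 0) = h v * (if st (take k v) \<in> ?W \<and> Des (st (drop k v)) = {} then 1 else 0)"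
      by simp
  qed
  also have "\<dots> = (\<Sum>w\<in>?W. phiJ n h k w {})"
    using sum_phi_exchange[of ?W n h k "{}"] finite_perms by simp
  finally show ?thesis .
qed

definition Bn :: "nat \<Rightarrow> nat list set" where
  "Bn n = {u \<in> perms n. \<not> (\<exists>k < n. \<forall>i \<in> {1..n - k}. u ! (k + i - 1) = i)}"

lemma notB:
  assumes "u \<in> perms n" "u \<notin> Bn n"
  shows "\<exists>k<n. drop k u = [1..<n-k+1]"
  using assms Bcond_iff[of u n] perms_length[OF assms(1)] unfolding Bn_def by blast

lemma ext_notB:
  assumes "k < n" "x \<in> perms k"
  shows "ext n k x \<notin> Bn n"
proof -
  have "ext n k x \<in> perms n" "drop k (ext n k x) = [1..<n-k+1]" using ext_props assms by auto
  then show ?thesis using Bcond_iff[of "ext n k x" n k] assms perms_length unfolding Bn_def by blast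
qed

lemma Mb_supp: "Mb u v \<noteq> 0 \<Longrightarrow> u \<in> perms n \<Longrightarrow> v \<in> perms n"
  unfolding Mb_def using wle_perms perms_length by (metis)

lemma Mb_SSym: assumes "u \<in> perms n" shows "Mb u \<in> SSym_deg n"
proof -
  have "{v. Mb u v \<noteq> 0} \<subseteq> perms n" using Mb_supp assms by blast
  then have "finite {v. Mb u v \<noteq> 0}" using finite_perms finite_subset by blast
  moreover have "\<forall>v. Mb u v \<noteq> 0 \<longrightarrow> is_perm v \<and> v \<in> perms n"
    using Mb_supp[OF _ assms] perms_length by (auto simp: is_perm_def)
  ultimately show ?thesis by (simp add: SSym_deg_def SSym_def)
qed

lemma part1:
  assumes uB: "u \<in> Bn n"
  shows "Mb u \<in> hopf_kernel_deg n"
proof -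
  have u: "u \<in> perms n" using uB by (simp add: Bn_def)
  have hyp: "phiJ n (Mb u) j w {} = 0" if j: "j < n" and w: "w \<in> perms j" for j w
  proof -
    have "\<forall>w. card (Inv w) = m \<longrightarrow> w \<in> perms j \<longrightarrow> phiJ n (Mb u) j w {} = 0" for m
    proof (induction m rule: less_induct)
      case (less m)
      show ?case
      proof (intro allI impI)
        fix w assume cw: "card (Inv w) = m" and w: "w \<in> perms j"
        let ?u' = "ext n j w"
        have u'1: "?u' \<in> perms n" and u'2: "drop j ?u' = [1..<n-j+1]" and u'3: "st (take j ?u') = w"
          using ext_props[OF w] j by auto
        have "u \<noteq> ?u'" using ext_notB[OF j w] uB by blast
        then have "Hs n (Mb u) ?u' = 0" using Hs_Mb[OF u u'1] by simp
        moreover have "Hs n (Mb u) ?u' = (\<Sum>w'\<in>{w'\<in>perms j. wle w' w}. phiJ n (Mb u) j w' {})"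
          using HS_phi[OF u'1 _ u'2] j u'3 by simp
        moreover have "{w'\<in>perms j. wle w' w} = insert w {w'\<in>perms j. wle w' w \<and> w' \<noteq> w}"
          using wle_refl[OF w] w by auto
        moreover have "(\<Sum>w'\<in>{w'\<in>perms j. wle w' w \<and> w' \<noteq> w}. phiJ n (Mb u) j w' {}) = 0"
        proof (rule sum.neutral, intro ballI)
          fix w' assume w': "w' \<in> {w'\<in>perms j. wle w' w \<and> w' \<noteq> w}"
          then have "card (Inv w') < m" using wle_card_less cw by blast
          then show "phiJ n (Mb u) j w' {} = 0" using less w' by blast
        qed
        ultimately show "phiJ n (Mb u) j w {} = 0" using finite_perms[of j] by simp
      qed
    qed
    then show ?thesis using w by blast
  qed
  have "Mb u \<in> hopf_kernel" using A2[OF Mb_SSym[OF u] hyp] by blast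
  then show ?thesis using Mb_SSym[OF u] by (simp add: hopf_kernel_deg_def)
qed

lemma Bn_sub: "Bn n \<subseteq> perms n" by (auto simp: Bn_def)

lemma finite_Bn: "finite (Bn n)" using Bn_sub finite_perms finite_subset by blast

lemma Hs_comb:
  assumes "u' \<in> perms n"
  shows "Hs n (\<lambda>v. \<Sum>u\<in>Bn n. a u * Mb u v) u' = (if u' \<in> Bn n then a u' else 0)"
proof -
  have "Hs n (\<lambda>v. \<Sum>u\<in>Bn n. a u * Mb u v) u' = (\<Sum>u\<in>Bn n. a u * (if u = u' then 1 else 0))"
  proof -
    have "Hs n (\<lambda>v. \<Sum>u\<in>Bn n. a u * Mb u v) u' = (\<Sum>u\<in>Bn n. a u * Hs n (Mb u) u')"
      using Hs_lin[OF finite_Bn] by blast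
    also have "\<dots> = (\<Sum>u\<in>Bn n. a u * (if u = u' then 1 else 0))"
    proof (intro sum.cong refl)
      fix u assume "u \<in> Bn n"
      then have "u \<in> perms n" using Bn_sub by blast
      then show "a u * Hs n (Mb u) u' = a u * (if u = u' then 1 else 0)" using Hs_Mb assms by simp
    qed
    finally show ?thesis .
  qed
  also have "\<dots> = (\<Sum>u\<in>Bn n. if u = u' then a u' else 0)" by (intro sum.cong) auto
  also have "\<dots> = (if u' \<in> Bn n then a u' else 0)" using finite_Bn by (simp add: sum.delta)
  finally show ?thesis .
qed

lemma part2:
  assumes h: "h \<in> hopf_kernel_deg n"
  shows "\<exists>!a :: nat list \<Rightarrow> rat. (\<forall>u. u \<notin> Bn n \<longrightarrow> a u = 0) \<and> h = (\<lambda>v. \<Sum>u \<in> Bn n. a u * Mb u v)"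
proof
  have hd: "h \<in> SSym_deg n" using h by (simp add: hopf_kernel_deg_def)
  define a where "a u = (if u \<in> Bn n then Hs n h u else 0)" for u
  define g where "g v = h v - (\<Sum>u \<in> Bn n. a u * Mb u v)" for v
  have gsupp: "v \<in> perms n" if "g v \<noteq> 0" for v
  proof (rule ccontr)
    assume nv: "v \<notin> perms n"
    have "h v = 0" using SSym_deg_supp[OF hd] nv by blast
    moreover have "Mb u v = 0" if "u \<in> Bn n" for u using Mb_supp nv that Bn_sub by blast
    ultimately have "g v = 0" unfolding g_def by simp
    then show False using that by simp
  qed
  have gH: "Hs n g u' = 0" if u': "u' \<in> perms n" for u'
  proof -
    have "Hs n g u' = Hs n h u' - (if u' \<in> Bn n then a u' else 0)"
      unfolding g_def Hs_diff Hs_comb[OF u'] ..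
    also have "\<dots> = 0"
    proof (cases "u' \<in> Bn n")
      case True then show ?thesis by (simp add: a_def)
    next
      case False
      obtain k where k: "k < n" "drop k u' = [1..<n-k+1]" using notB[OF u' False] by blast
      have "Hs n h u' = (\<Sum>w\<in>{w\<in>perms k. wle w (st (take k u'))}. phiJ n h k w {})"
        using HS_phi[OF u' _ k(2)] k(1) by simp
      also have "\<dots> = 0" using A1[OF h k(1)] perms_length by (intro sum.neutral) auto
      finally show ?thesis using False by simp
    qed
    finally show ?thesis .
  qed
  have "g v = 0" for v using Hs_zero[of g n, OF gsupp gH] by blast
  then show "(\<forall>u. u \<notin> Bn n \<longrightarrow> a u = 0) \<and> h = (\<lambda>v. \<Sum>u \<in> Bn n. a u * Mb u v)"
    unfolding g_def a_def by (auto simp: fun_eq_iff)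
next
  fix b assume b: "(\<forall>u. u \<notin> Bn n \<longrightarrow> b u = 0) \<and> h = (\<lambda>v. \<Sum>u \<in> Bn n. b u * Mb u v)"
  show "b = (\<lambda>u. if u \<in> Bn n then Hs n h u else 0)"
  proof
    fix u show "b u = (if u \<in> Bn n then Hs n h u else 0)"
    proof (cases "u \<in> Bn n")
      case True
      then have "Hs n h u = b u" using b Hs_comb[of u n b] Bn_sub by auto
      then show ?thesis using True by simp
    qed (use b in auto)
  qed
qed


lemma card_perms: "card (perms k) = fact k"
proof -
  have "perms k = permutations_of_set {1..k}"
    by (auto simp: perms_def permutations_of_set_def)
  then show ?thesis by simp
qed

lemma last_ext: "k < n \<Longrightarrow> last (ext n k x) = n - k"
  unfolding ext_def by (simp del: upt_Suc add: last_upt)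

lemma ext_inj: "inj_on (ext n k) A"
  unfolding ext_def inj_on_def by (auto simp: inj_map_eq_map inj_on_def)

lemma notB_ext:
  assumes u: "u \<in> perms n" and k: "k < n" and dr: "drop k u = [1..<n-k+1]"
  shows "u \<in> ext n k ` perms k"
proof -
  have L: "length u = n" using u perms_length by blast
  have du: "distinct u" using u perms_distinct by blast
  have su: "set u = {1..n}" using u by (simp add: perms_def)
  have disj: "set (take k u) \<inter> set (drop k u) = {}" using du
    by (metis append_take_drop_id distinct_append)
  have un: "set (take k u) \<union> set (drop k u) = {1..n}" using su
    by (metis append_take_drop_id set_append)
  have sd: "set (drop k u) = {1..n-k}" using dr by auto
  have "set (take k u) = {1..n} - {1..n-k}" using disj un sd by blast
  also have "\<dots> = {n-k+1..n}" by auto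
  finally have st: "set (take k u) = {n-k+1..n}" .
  define x where "x = map (\<lambda>i. i - (n-k)) (take k u)"
  have mx: "map (\<lambda>i. i + (n-k)) x = take k u"
    unfolding x_def using st by (auto intro!: map_idI)
  have dx: "distinct x" unfolding x_def using du st
    by (auto simp: distinct_map inj_on_def intro!: distinct_take)
  have "set x = (\<lambda>i. i - (n-k)) ` {n-k+1..n}" unfolding x_def using st by simp
  also have "\<dots> = {1..k}"
  proof
    show "(\<lambda>i. i - (n-k)) ` {n-k+1..n} \<subseteq> {1..k}" using k by auto
    show "{1..k} \<subseteq> (\<lambda>i. i - (n-k)) ` {n-k+1..n}"
    proof
      fix y assume y: "y \<in> {1..k}"
      then have "y = (y + (n-k)) - (n-k)" "y + (n-k) \<in> {n-k+1..n}" using k by auto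
      then show "y \<in> (\<lambda>i. i - (n-k)) ` {n-k+1..n}" by blast
    qed
  qed
  finally have "x \<in> perms k" using dx by (simp add: perms_def)
  moreover have "ext n k x = u" unfolding ext_def mx dr[symmetric] by simp
  ultimately show ?thesis by blast
qed

lemma card_Bn:
  assumes n: "n \<ge> 1"
  shows "card (Bn n) = fact n - (\<Sum>k<n. fact k)"
proof -
  define E where "E k = ext n k ` perms k" for k
  have eq: "perms n - Bn n = (\<Union>k<n. E k)"
  proof
    show "perms n - Bn n \<subseteq> (\<Union>k<n. E k)"
    proof
      fix u assume u: "u \<in> perms n - Bn n"
      then obtain k where "k < n" "drop k u = [1..<n-k+1]" using notB by blast
      then show "u \<in> (\<Union>k<n. E k)" using notB_ext u unfolding E_def by blast
    qed
    show "(\<Union>k<n. E k) \<subseteq> perms n - Bn n"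
      unfolding E_def using ext_props ext_notB by fastforce
  qed
  have cardE: "card (E k) = fact k" for k
    unfolding E_def using ext_inj card_image card_perms by metis
  have disj: "E i \<inter> E j = {}" if "i \<in> {..<n}" "j \<in> {..<n}" "i \<noteq> j" for i j
  proof -
    have "last y = n - i" if "y \<in> E i" for y using that \<open>i \<in> {..<n}\<close> unfolding E_def by (auto simp: last_ext)
    moreover have "last y = n - j" if "y \<in> E j" for y using that \<open>j \<in> {..<n}\<close> unfolding E_def by (auto simp: last_ext)
    moreover have "n - i \<noteq> n - j" using that by auto
    ultimately show ?thesis by fastforce
  qed
  have finE: "finite (E k)" for k unfolding E_def using finite_perms by simp
  have "card (perms n - Bn n) = (\<Sum>k<n. card (E k))"
    unfolding eq by (rule card_UN_disjoint) (use finE disj in auto)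
  then have c1: "card (perms n - Bn n) = (\<Sum>k<n. fact k)" using cardE by simp
  have "Bn n = perms n - (perms n - Bn n)" using Bn_sub by blast
  then have "card (Bn n) = card (perms n) - card (perms n - Bn n)"
    by (metis Diff_subset card_Diff_subset finite_perms finite_subset)
  then show ?thesis using c1 card_perms by simp
qed

theorem mainTheorem15:
  fixes n :: nat
  assumes "n \<ge> 1"
  defines "B \<equiv> {u \<in> perms n. \<not> (\<exists>k < n. \<forall>i \<in> {1..n - k}. u ! (k + i - 1) = i)}"
  shows "(\<forall>u \<in> B. Mb u \<in> hopf_kernel_deg n)
       \<and> (\<forall>h \<in> hopf_kernel_deg n. \<exists>!a :: nat list \<Rightarrow> rat.
             (\<forall>u. u \<notin> B \<longrightarrow> a u = 0) \<and> h = (\<lambda>v. \<Sum>u \<in> B. a u * Mb u v))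
       \<and> card B = fact n - (\<Sum>k < n. fact k)"
proof -
  have BB: "B = Bn n" unfolding B_def Bn_def ..
  show ?thesis unfolding BB using part1 part2 card_Bn[OF assms(1)] by blast
qed

end
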